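(* Let $f\in\mathcal{A}$ satisfy $L(f)/l(f)<+\infty$. Then $$\|f\|\le\frac{2}{\pi}\bigl(1+L(f)\bigr)\log\frac{L(f)}{l(f)}.$$
   Context: $\mathbb{D}=\{z\in\mathbb{C}:|z|<1\}$; $\mathcal{A}$ is the class of analytic $f$ on $\mathbb{D}$ with $f(0)=0$, $f'(0)=1$; $zf'(z)/f(z)$ at $z=0$ is understood as $1$. $L(f)=\sup_{z\in\mathbb{D}}|zf'(z)/f(z)|$, $l(f)=\inf_{z\in\mathbb{D}}|zf'(z)/f(z)|$. The pre-Schwarzian norm is $\|f\|=\sup_{z\in\mathbb{D}}(1-|z|^2)|f''(z)/f'(z)|$. *)

theory Defs
  imports "HOL-Complex_Analysis.Complex_Analysis" "HOL-Library.Extended_Real"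
begin

definition classA :: "(complex \<Rightarrow> complex) \<Rightarrow> bool" where
  "classA f \<longleftrightarrow> f holomorphic_on ball 0 1 \<and> f 0 = 0 \<and> deriv f 0 = 1"

text \<open>|z f'(z)/f(z)| as an extended real: value 1 at z = 0; at a zero z \<noteq> 0 of f
  the function z f'/f has a pole, so the value is taken to be \<infinity>.\<close>
definition absQ :: "(complex \<Rightarrow> complex) \<Rightarrow> complex \<Rightarrow> ereal" where
  "absQ f z = (if z = 0 then 1 else if f z = 0 then \<infinity>
               else ereal (cmod (z * deriv f z / f z)))"

definition Lsup :: "(complex \<Rightarrow> complex) \<Rightarrow> ereal" where
  "Lsup f = (SUP z\<in>ball 0 1. absQ f z)"

definition linf :: "(complex \<Rightarrow> complex) \<Rightarrow> ereal" where
  "linf f = (INF z\<in>ball 0 1. absQ f z)"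

text \<open>Pre-Schwarzian norm sup (1-|z|^2)|f''/f'|; at zeros of f' (poles of f''/f')
  the value is \<infinity>.\<close>
definition preSchwarzian_norm :: "(complex \<Rightarrow> complex) \<Rightarrow> ereal" where
  "preSchwarzian_norm f = (SUP z\<in>ball 0 1.
      (if deriv f z = 0 then \<infinity>
       else ereal ((1 - (cmod z)\<^sup>2) * cmod (deriv (deriv f) z / deriv f z))))"

end

theory Submission
  imports Defs
begin

lemma cayley_half:
  fixes u q :: complex
  assumes "Re u > 0" "Re q > 0"
  shows "cmod ((u - q) / (u + cnj q)) < 1"
proof -
  have pos: "cmod (u + cnj q) > 0"
  proof -
    have "Re (u + cnj q) > 0" using assms by simp
    thus ?thesis using complex_Re_le_cmod[of "u + cnj q"] by linarith
  qed
  have "(cmod (u - q))^2 < (cmod (u + cnj q))^2"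
    using assms mult_pos_pos[OF assms] unfolding cmod_power2 by (simp add: power2_eq_square algebra_simps)
  hence "cmod (u - q) < cmod (u + cnj q)"
    by (meson norm_ge_zero power_less_imp_less_base)
  thus ?thesis using pos by (simp add: norm_divide divide_less_eq)
qed

lemma strip_schwarz:
  fixes k :: "complex \<Rightarrow> complex"
  assumes hol: "k holomorphic_on ball 0 1"
    and strip: "\<And>z. z \<in> ball 0 1 \<Longrightarrow> a < Re (k z) \<and> Re (k z) < b"
  shows "cmod (deriv k 0) \<le> 2*(b-a)/pi"
proof -
  define W where "W = b - a"
  have W: "W > 0" using strip[of 0] by (simp add: W_def)
  define m where "m = (a+b)/2"
  define c where "c = \<i> * complex_of_real (pi/W)"
  define E where "E = (\<lambda>w. exp (c * (w - complex_of_real m)))"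
  have ReE: "Re (E w) > 0" if "a < Re w" "Re w < b" for w
  proof -
    have "Im (c * (w - complex_of_real m)) = pi/W * (Re w - m)"
      by (simp add: c_def)
    moreover have "-(pi/2) < pi/W * (Re w - m)" "pi/W * (Re w - m) < pi/2"
      using that W by (auto simp: m_def W_def field_simps)
    ultimately have "cos (Im (c * (w - complex_of_real m))) > 0"
      by (simp add: cos_gt_zero_pi)
    thus ?thesis by (simp add: E_def Re_exp)
  qed
  define q where "q = E (k 0)"
  have q: "Re q > 0" using ReE strip[of 0] by (simp add: q_def)
  define F where "F = (\<lambda>z. (E (k z) - q) / (E (k z) + cnj q))"
  have den: "E (k z) + cnj q \<noteq> 0" if "z \<in> ball 0 1" for z
  proof -
    have "Re (E (k z) + cnj q) > 0" using ReE[of "k z"] strip[OF that] q by simp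
    thus ?thesis by (metis less_irrefl zero_complex.simps(1))
  qed
  have holE: "(\<lambda>z. E (k z)) holomorphic_on ball 0 1"
    unfolding E_def by (intro holomorphic_intros hol)
  have holF: "F holomorphic_on ball 0 1"
    unfolding F_def using den by (intro holomorphic_intros holE) auto
  have F0: "F 0 = 0" by (simp add: F_def q_def)
  have Flt: "norm (F z) < 1" if "norm z < 1" for z
  proof -
    have "z \<in> ball 0 1" using that by simp
    thus ?thesis unfolding F_def using cayley_half[OF ReE q] strip by blast
  qed
  have dF1: "norm (deriv F 0) \<le> 1"
    using Schwarz_Lemma(2)[OF holF F0 Flt, of 0] by simp
  have dk: "(k has_field_derivative deriv k 0) (at 0)"
    using holomorphic_derivI[OF hol] by simp
  have dEk: "((\<lambda>z. E (k z)) has_field_derivative q * (c * deriv k 0)) (at 0)"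
    unfolding E_def q_def
    by (rule derivative_eq_intros dk refl | simp)+
  have dF: "(F has_field_derivative (q * (c * deriv k 0)) / (q + cnj q)) (at 0)"
  proof -
    have "(F has_field_derivative
       ((q * (c * deriv k 0)) * (E (k 0) + cnj q) - (E (k 0) - q) * (q * (c * deriv k 0))) /
        ((E (k 0) + cnj q) * (E (k 0) + cnj q))) (at 0)"
    proof -
      have d1: "((\<lambda>x. E (k x) - q) has_field_derivative q*(c*deriv k 0)) (at 0)"
        using DERIV_diff[OF dEk DERIV_const] by simp
      have d2: "((\<lambda>x. E (k x) + cnj q) has_field_derivative q*(c*deriv k 0)) (at 0)"
        using DERIV_add[OF dEk DERIV_const] by simp
      show ?thesis unfolding F_def
        by (rule DERIV_divide[OF d1 d2 den]) simp
    qed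
    moreover have "q + cnj q \<noteq> 0" using q by (metis complex_add_cnj less_irrefl of_real_eq_0_iff mult_eq_0_iff zero_neq_numeral)
    ultimately show ?thesis by (simp add: q_def)
  qed
  hence "deriv F 0 = (q * (c * deriv k 0)) / (q + cnj q)" by (rule DERIV_imp_deriv)
  hence "cmod (deriv F 0) = (cmod q * (pi/W) * cmod (deriv k 0)) / (2 * Re q)"
    using q W by (simp add: norm_divide norm_mult complex_add_cnj c_def)
  hence "(cmod q * (pi/W) * cmod (deriv k 0)) / (2 * Re q) \<le> 1" using dF1 by simp
  hence "cmod q * (pi/W) * cmod (deriv k 0) \<le> 2 * Re q" 
    using pos_divide_le_eq[of "2*Re q" "cmod q * (pi/W) * cmod (deriv k 0)" 1] q by (metis mult_1 mult_pos_pos zero_less_numeral)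
  moreover have "Re q \<le> cmod q" by (rule complex_Re_le_cmod)
  ultimately have "Re q * ((pi/W) * cmod (deriv k 0)) \<le> Re q * 2"
    by (smt (verit, ccfv_SIG) mult.assoc mult_right_mono norm_ge_zero W pi_gt_zero divide_nonneg_nonneg mult_nonneg_nonneg)
  hence "(pi/W) * cmod (deriv k 0) \<le> 2" using q by (meson mult_le_cancel_left_pos)
  thus ?thesis using W by (simp add: W_def field_simps)
qed

lemma strip_pick:
  fixes h :: "complex \<Rightarrow> complex"
  assumes hol: "h holomorphic_on ball 0 1"
    and strip: "\<And>z. z \<in> ball 0 1 \<Longrightarrow> a < Re (h z) \<and> Re (h z) < b"
    and z: "norm z < 1"
  shows "cmod (deriv h z) * (1 - (cmod z)^2) \<le> 2*(b-a)/pi"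
proof -
  define M where "M = Moebius_function 0 (-z)"
  have nz: "norm (-z) < 1" using z by simp
  have Mb: "M w \<in> ball 0 1" if "w \<in> ball 0 1" for w
    using Moebius_function_norm_lt_1[OF nz, of w 0] that by (simp add: M_def)
  have holM: "M holomorphic_on ball 0 1" unfolding M_def by (rule Moebius_function_holomorphic[OF nz])
  have holk: "(h \<circ> M) holomorphic_on ball 0 1"
    by (rule holomorphic_on_compose_gen[OF holM hol]) (use Mb in auto)
  have stk: "a < Re ((h \<circ> M) w) \<and> Re ((h \<circ> M) w) < b" if "w \<in> ball 0 1" for w
    using strip[OF Mb[OF that]] by simp
  have M0: "M 0 = z" by (simp add: M_def Moebius_function_simple)
  have dM: "(M has_field_derivative (1 - cnj z * z)) (at 0)"
  proof -
    have "M = (\<lambda>w. (w + z) / (1 + cnj z * w))"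
      by (auto simp: M_def Moebius_function_simple fun_eq_iff)
    moreover have "((\<lambda>w. (w + z) / (1 + cnj z * w)) has_field_derivative (1 - cnj z * z)) (at 0)"
      by (rule derivative_eq_intros refl | simp)+
    ultimately show ?thesis by simp
  qed
  have dh: "(h has_field_derivative deriv h z) (at (M 0))"
    using holomorphic_derivI[OF hol, of z] z M0 by simp
  have "deriv (h \<circ> M) 0 = deriv h z * (1 - cnj z * z)"
    by (rule DERIV_imp_deriv[OF DERIV_chain[OF dh dM]])
  moreover have "cmod (1 - cnj z * z) = 1 - (cmod z)^2"
  proof -
    have "cnj z * z = complex_of_real ((cmod z)^2)" by (metis complex_norm_square mult.commute)
    hence "1 - cnj z * z = complex_of_real (1 - (cmod z)^2)" by (simp only: of_real_diff of_real_1)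
    moreover have "1 - (cmod z)^2 \<ge> 0" using z by (simp add: power_le_one)
    ultimately show ?thesis by (metis norm_of_real abs_of_nonneg)
  qed
  ultimately have "cmod (deriv (h \<circ> M) 0) = cmod (deriv h z) * (1 - (cmod z)^2)"
    by (simp add: norm_mult)
  thus ?thesis using strip_schwarz[OF holk stk] by (simp only:)
qed

theorem proposition2p4:
  fixes f :: "complex \<Rightarrow> complex"
  assumes "classA f"
    and "Lsup f < \<infinity>" and "linf f > 0"
  shows "preSchwarzian_norm f \<le>
    ereal (2 / pi * (1 + real_of_ereal (Lsup f))
           * ln (real_of_ereal (Lsup f) / real_of_ereal (linf f)))"
proof -
  have hol: "f holomorphic_on ball 0 1" and f0: "f 0 = 0" and d0: "deriv f 0 = 1"
    using assms(1) by (auto simp: classA_def)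
  define Lr where "Lr = real_of_ereal (Lsup f)"
  define lr where "lr = real_of_ereal (linf f)"
  have A0: "absQ f 0 = 1" by (simp add: absQ_def)
  have "Lsup f \<ge> 1" unfolding Lsup_def using A0 by (metis SUP_upper centre_in_ball zero_less_one)
  hence LsE: "Lsup f = ereal Lr" and Lr1: "Lr \<ge> 1"
    using assms(2) unfolding Lr_def by (cases "Lsup f"; auto)+
  have "linf f \<le> 1" unfolding linf_def using A0 by (metis INF_lower centre_in_ball zero_less_one)
  hence liE: "linf f = ereal lr" and lr0: "lr > 0" and lr1: "lr \<le> 1"
    using assms(3) unfolding lr_def by (cases "linf f"; auto)+
  have fnz: "f w \<noteq> 0" if "w \<in> ball 0 1" "w \<noteq> 0" for w
  proof
    assume "f w = 0"
    hence "absQ f w = \<infinity>" using that by (simp add: absQ_def)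
    hence "Lsup f \<ge> \<infinity>" unfolding Lsup_def using that by (metis SUP_upper)
    thus False using assms(2) by simp
  qed
  have Qb: "lr \<le> cmod (w * deriv f w / f w) \<and> cmod (w * deriv f w / f w) \<le> Lr"
    if "w \<in> ball 0 1" "w \<noteq> 0" for w
  proof -
    have "absQ f w = ereal (cmod (w * deriv f w / f w))" using that fnz by (simp add: absQ_def)
    moreover have "linf f \<le> absQ f w" "absQ f w \<le> Lsup f"
      unfolding linf_def Lsup_def using that by (auto intro: INF_lower SUP_upper)
    ultimately show ?thesis using LsE liE by simp
  qed
  define Q where "Q = (\<lambda>w. if w = 0 then deriv f 0 else (f w - f 0) / (w - 0))"
  have holQ: "Q holomorphic_on ball 0 1" unfolding Q_def by (rule pole_lemma[OF hol]) simp
  have Qnz: "Q w \<noteq> 0" if "w \<in> ball 0 1" for w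
    using that fnz d0 f0 by (auto simp: Q_def)
  define G where "G = (\<lambda>w. deriv f w / Q w)"
  have holG: "G holomorphic_on ball 0 1"
    unfolding G_def using Qnz by (intro holomorphic_intros holomorphic_deriv hol holQ) auto
  have G0: "G 0 = 1" by (simp add: G_def Q_def d0)
  have Gw: "G w = w * deriv f w / f w" if "w \<noteq> 0" for w
    using that by (simp add: G_def Q_def f0)
  have Gb: "lr \<le> cmod (G w) \<and> cmod (G w) \<le> Lr" if "w \<in> ball 0 1" for w
    using Qb[OF that] Gw G0 lr1 Lr1 by (cases "w = 0") auto
  have Gnz: "G w \<noteq> 0" if "w \<in> ball 0 1" for w
    using Gb[OF that] lr0 by auto
  obtain g where holg: "g holomorphic_on ball 0 1" and eg: "\<And>w. w \<in> ball 0 1 \<Longrightarrow> exp (g w) = G w"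
    using holomorphic_logarithm_exists[OF convex_ball open_ball holG Gnz, of 0] by auto
  define h where "h = (\<lambda>w. g w - g 0)"
  have holh: "h holomorphic_on ball 0 1" unfolding h_def by (intro holomorphic_intros holg)
  have eh: "exp (h w) = G w" if "w \<in> ball 0 1" for w
    using eg[OF that] eg[of 0] G0 by (simp add: h_def exp_diff)
  have Reh: "ln lr \<le> Re (h w) \<and> Re (h w) \<le> ln Lr" if "w \<in> ball 0 1" for w
  proof -
    have "cmod (G w) = exp (Re (h w))" using eh[OF that] by (metis norm_exp_eq_Re)
    thus ?thesis using Gb[OF that] lr0 by (metis ln_exp ln_le_cancel_iff exp_gt_zero order_less_le_trans)
  qed
  have dh: "(h has_field_derivative deriv h w) (at w)" if "w \<in> ball 0 1" for w
    using holomorphic_derivI[OF holh open_ball that] .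
  have df: "(f has_field_derivative deriv f w) (at w)" if "w \<in> ball 0 1" for w
    using holomorphic_derivI[OF hol open_ball that] .
  have dG: "(G has_field_derivative G w * deriv h w) (at w)" if "w \<in> ball 0 1" for w
  proof -
    have "((\<lambda>x. exp (h x)) has_field_derivative exp (h w) * deriv h w) (at w)"
      by (rule DERIV_chain2[OF DERIV_exp dh[OF that]])
    hence "((\<lambda>x. exp (h x)) has_field_derivative G w * deriv h w) (at w)" using eh[OF that] by simp
    thus ?thesis by (rule has_field_derivative_transform_within_open[OF _ open_ball that]) (simp add: eh)
  qed
  have pick: "cmod (deriv h w) * (1 - (cmod w)^2) \<le> 2*(ln Lr - ln lr + 2*e)/pi"
    if "w \<in> ball 0 1" "e > 0" for w e
  proof -
    have "cmod (deriv h w) * (1 - (cmod w)^2) \<le> 2*((ln Lr + e) - (ln lr - e))/pi"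
    proof (rule strip_pick[OF holh])
      fix z :: complex assume "z \<in> ball 0 1"
      thus "ln lr - e < Re (h z) \<and> Re (h z) < ln Lr + e" using Reh[of z] that(2) by auto
    qed (use that in auto)
    thus ?thesis by (simp add: algebra_simps)
  qed
  define E where "E = (\<lambda>z. (1 - (cmod z)^2) * cmod (deriv (deriv f) z / deriv f z))"
  have fd: "deriv f x = G x * f x / x" if "x \<in> ball 0 1" "x \<noteq> 0" for x
    using Gw[OF that(2)] fnz[OF that] that(2) by simp
  have Eeps: "E z \<le> (1 + Lr) * (2*(ln Lr - ln lr + 2*e)/pi)"
    if zb: "z \<in> ball 0 1" and z0: "z \<noteq> 0" and e: "e > 0" for z e
  proof -
    define C where "C = 2*(ln Lr - ln lr + 2*e)/pi"
    define r where "r = cmod z"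
    have r: "0 < r" "r < 1" using zb z0 by (auto simp: r_def)
    have r2: "0 < 1 - r^2" using r mult_strict_mono[of r 1 r 1] by (simp add: power2_eq_square)
    have hb: "cmod (deriv h w) \<le> C / (1 - r^2)" if "w \<in> cball 0 r" for w
    proof -
      have wb: "w \<in> ball 0 1" using that r by auto
      have "(1 - r^2) \<le> 1 - (cmod w)^2" using that r by (auto intro: power_mono)
      hence "cmod (deriv h w) * (1 - r^2) \<le> C"
        using pick[OF wb e] unfolding C_def by (smt (verit) mult_left_mono norm_ge_zero)
      thus ?thesis using r2 by (simp add: pos_le_divide_eq)
    qed
    have Gdb: "cmod (G z - G 0) \<le> (Lr * (C / (1 - r^2))) * cmod (z - 0)"
    proof (rule field_differentiable_bound[of "cball 0 r" G "\<lambda>w. G w * deriv h w"])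
      show "convex (cball (0::complex) r)" by simp
      show "(G has_field_derivative G w * deriv h w) (at w within cball 0 r)" if "w \<in> cball 0 r" for w
        using dG[of w] that r by (auto intro: has_field_derivative_at_within)
      show "cmod (G w * deriv h w) \<le> Lr * (C / (1 - r^2))" if "w \<in> cball 0 r" for w
      proof -
        have wb: "w \<in> ball 0 1" using that r by auto
        show ?thesis unfolding norm_mult
          by (rule mult_mono) (use Gb[OF wb] hb[OF that] Lr1 in auto)
      qed
      show "z \<in> cball 0 r" "0 \<in> cball 0 r" using r by (auto simp: r_def)
    qed
    hence G1: "cmod (G z - 1) \<le> Lr * C / (1 - r^2) * r" using G0 by (simp add: r_def)
    have dX: "((\<lambda>x. G x * f x / x) has_field_derivative
        ((G z * deriv h z * f z + deriv f z * G z) * z - G z * f z * 1) / (z * z)) (at z)"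
      by (rule DERIV_divide[OF DERIV_mult[OF dG[OF zb] df[OF zb]] DERIV_ident z0])
    have "((deriv f) has_field_derivative
        ((G z * deriv h z * f z + deriv f z * G z) * z - G z * f z * 1) / (z * z)) (at z)"
      by (rule has_field_derivative_transform_within_open[OF dX, of "ball 0 1 - {0}"])
         (use zb z0 fd in auto)
    hence ddf: "deriv (deriv f) z = ((G z * deriv h z * f z + deriv f z * G z) * z - G z * f z * 1) / (z * z)"
      by (rule DERIV_imp_deriv)
    have ratio: "deriv (deriv f) z / deriv f z = deriv h z + (G z - 1) / z"
      unfolding ddf fd[OF zb z0] using z0 fnz[OF zb z0] Gnz[OF zb]
      by (simp add: field_simps)
    have "E z = (1 - r^2) * cmod (deriv h z + (G z - 1) / z)"
      by (simp add: E_def ratio r_def)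
    also have "\<dots> \<le> (1 - r^2) * cmod (deriv h z) + (1 - r^2) * (cmod (G z - 1) / r)"
      using r2 norm_triangle_ineq[of "deriv h z" "(G z - 1) / z"]
      by (smt (verit, best) mult_left_mono norm_divide r_def distrib_left)
    also have "\<dots> \<le> C + Lr * C"
    proof -
      have "(1 - r^2) * cmod (deriv h z) \<le> C" using pick[OF zb e] unfolding C_def r_def by (simp add: mult.commute)
      moreover have "(1 - r^2) * (cmod (G z - 1) / r) \<le> Lr * C"
      proof -
        have "cmod (G z - 1) / r \<le> Lr * C / (1 - r^2)" using G1 r by (simp add: divide_le_eq)
        thus ?thesis using r2 by (simp add: pos_le_divide_eq mult.commute)
      qed
      ultimately show ?thesis by linarith
    qed
    also have "\<dots> = (1 + Lr) * C" by (simp add: algebra_simps)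
    finally show ?thesis unfolding C_def .
  qed
  define B where "B = 2 / pi * (1 + Lr) * ln (Lr / lr)"
  have lnd: "ln (Lr / lr) = ln Lr - ln lr" using lr0 Lr1 by (simp add: ln_div)
  have Enz: "E z \<le> B" if zb: "z \<in> ball 0 1" and z0: "z \<noteq> 0" for z
  proof (rule field_le_epsilon)
    fix e :: real assume e: "e > 0"
    define e' where "e' = e * pi / (4 * (1 + Lr))"
    have e': "e' > 0" using e Lr1 by (simp add: e'_def)
    have L0: "1 + Lr \<noteq> 0" using Lr1 by simp
    have q1: "(1+Lr) * 4 * e' / pi = e"
    proof -
      have L: "1 + Lr > 0" using Lr1 by simp
      have "(1+Lr) * 4 * (e * pi / (4 * (1 + Lr))) = e * pi" using L by (simp add: field_simps)
      thus ?thesis by (simp add: e'_def)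
    qed
    have q2: "(1 + Lr) * (2*(ln Lr - ln lr + 2*e')/pi) = 2 / pi * (1 + Lr) * (ln Lr - ln lr) + (1+Lr) * 4 * e' / pi"
      by (simp add: field_simps)
    have "(1 + Lr) * (2*(ln Lr - ln lr + 2*e')/pi) = B + e"
      unfolding q2 q1 B_def lnd ..
    thus "E z \<le> B + e" using Eeps[OF zb z0 e'] by simp
  qed
  have c1: "isCont (deriv f) 0"
    using continuous_on_eq_continuous_at[OF open_ball, of 0 1 "deriv f"] holomorphic_on_imp_continuous_on[OF holomorphic_deriv[OF hol open_ball]] by simp
  have c2: "isCont (deriv (deriv f)) 0"
    using continuous_on_eq_continuous_at[OF open_ball, of 0 1 "deriv (deriv f)"] holomorphic_on_imp_continuous_on[OF holomorphic_deriv[OF holomorphic_deriv[OF hol open_ball] open_ball]] by simp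
  have "isCont E 0" unfolding E_def using c1 c2 d0 by (intro continuous_intros) auto
  hence "(E \<longlongrightarrow> E 0) (at 0)" by (simp add: isCont_def)
  moreover have "eventually (\<lambda>z. E z \<le> B) (at 0)"
    unfolding eventually_at by (rule exI[of _ 1]) (auto simp: dist_norm intro: Enz)
  ultimately have E0: "E 0 \<le> B" by (rule tendsto_upperbound) simp
  have Eall: "E z \<le> B" if "z \<in> ball 0 1" for z
    using E0 Enz that by (cases "z = 0") auto
  have dnz: "deriv f z \<noteq> 0" if "z \<in> ball 0 1" for z
    using d0 fd[OF that] Gnz[OF that] fnz[OF that] by (cases "z = 0") auto
  have "preSchwarzian_norm f \<le> ereal B"
    unfolding preSchwarzian_norm_def
  proof (rule SUP_least)
    fix z :: complex assume "z \<in> ball 0 1"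
    thus "(if deriv f z = 0 then \<infinity>
       else ereal ((1 - (cmod z)\<^sup>2) * cmod (deriv (deriv f) z / deriv f z))) \<le> ereal B"
      using dnz Eall unfolding E_def by auto
  qed
  thus ?thesis unfolding B_def Lr_def lr_def .
qed

end
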